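(* There is a constant $C(m,\tau,\gamma,\beta,d)$ such that the following holds. Let $\Theta\subseteq\mathbb Z^{Nd}$ be symmetric, let $\ell\ge1$, $L=\ell^\gamma$, and let $\Lambda_\ell=\Lambda_\ell^{(N)}(\mathbf a)\subseteq\Theta$ be $m$-localizing for $H$. Let $\psi:\Theta\to\mathbb R$ be a generalized eigenfunction of $H_\Theta$ with generalized eigenvalue $\mu$. Assume $$\operatorname{dist}(\mu,\sigma(H_{\Lambda_\ell}))\ge\tfrac12e^{-L^\beta}\quad\text{and}\quad \ell\ge C(m,\tau,\gamma,\beta,d)\,(N\log(2+N))^{1/\tau}.$$ Then, with $m'=m(1-3\ell^{-\frac{1-\tau}{2}})$ and $\widetilde\tau=(1+\tau)/2$, for all $\mathbf y\in\Lambda_\ell^{\Theta,\ell^{\widetilde\tau}}$, $$|\psi(\mathbf y)|\le\max_{\mathbf v\in\partial^\Theta_{ex}\Lambda_\ell}e^{-m' d_S(\mathbf y,\mathbf v)}|\psi(\mathbf v)|.$$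
   Context: Fix $\beta,\tau\in(0,1)$, $\gamma>1$ with $\beta<\gamma^{-1}<1<\gamma<2$ and $\max(\gamma\beta,\gamma^{-1})<\tau<1$; $m>0$, $d,N\ge1$. Points of $\mathbb Z^{Nd}$ are $\mathbf x=(x_1,\dots,x_N)$, $x_j\in\mathbb Z^d$; $d_S(\mathbf x,\mathbf y)=\min_{\pi\in S_N}\|\mathbf x-\pi\mathbf y\|_\infty$ with $\pi\mathbf y=(y_{\pi(1)},\dots,y_{\pi(N)})$; $d_S(\mathbf x,A)=\min_{\mathbf y\in A}d_S(\mathbf x,\mathbf y)$. Symmetric = invariant under all permutations. $\Lambda_\ell^{(N)}(\mathbf a)=\{\mathbf x:d_S(\mathbf x,\mathbf a)\le\ell\}$. $H=-\Delta^{(N)}+\lambda V+U$ on $\ell^2(\mathbb Z^{Nd})$, $(\Delta^{(N)}\varphi)(\mathbf x)=\sum_{\|\mathbf y-\mathbf x\|_1=1}\varphi(\mathbf y)$, $V(\mathbf x)=\sum_j\mathcal V(x_j)$, $U(\mathbf x)=\sum_{i<j}\mathcal U(x_i-x_j)$ (any fixed real-valued $\mathcal V$, finitely supported $\mathcal U$, $\lambda>0$). $H_\Theta=1_\Theta H1_\Theta$ on $\ell^2(\Theta)$. A generalized eigenfunction of $H_\Theta$ with generalized eigenvalue $\mu$ is a function $\psi$ on $\Theta$ with $(H_\Theta\psi)(\mathbf x)=\mu\psi(\mathbf x)$ for all $\mathbf x\in\Theta$. For $\Phi\subseteq\Theta$ symmetric: $\partial^\Theta\Phi=\{(\mathbf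 u,\mathbf v)\in\Phi\times(\Theta\setminus\Phi):d_S(\mathbf u,\mathbf v)=1\}$, $\partial^\Theta_{ex}\Phi=\{\mathbf v\in\Theta\setminus\Phi:\exists\mathbf u,\ (\mathbf u,\mathbf v)\in\partial^\Theta\Phi\}$, and $\Phi^{\Theta,r}=\{\mathbf x\in\Phi:d_S(\mathbf x,\Theta\setminus\Phi)\ge r\}$. Localizing: $\varphi\in\ell^2(\Lambda_\ell)$ is $(\mathbf x,m)$-localizing if $\|\varphi\|_2=1$ and $|\varphi(\mathbf y)|\le e^{-m d_S(\mathbf y,\mathbf x)}$ whenever $\mathbf y\in\Lambda_\ell$, $d_S(\mathbf y,\mathbf x)\ge\ell^\tau$; $m$-localizing if this holds for some $\mathbf x\in\Lambda_\ell$; $\Lambda_\ell$ is $m$-localizing for $H$ if $H_{\Lambda_\ell}$ has an orthonormal eigenbasis of $m$-localizing functions. *)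

theory Defs
  imports "HOL-Analysis.Analysis" "HOL-Combinatorics.Permutations"
begin

text \<open>A point of Z^(N d) is represented as cfg: x j k is coordinate k of particle j,
  with x j k = 0 whenever j >= N or k >= d. A point of Z^d is a function nat => int
  vanishing from index d on.\<close>

type_synonym cfg = "nat \<Rightarrow> nat \<Rightarrow> int"

definition conf :: "nat \<Rightarrow> nat \<Rightarrow> cfg set" where
  "conf N d = {x. \<forall>j k. (N \<le> j \<or> d \<le> k) \<longrightarrow> x j k = 0}"

definition pointsZ :: "nat \<Rightarrow> (nat \<Rightarrow> int) set" where
  "pointsZ d = {z. \<forall>k. d \<le> k \<longrightarrow> z k = 0}"

definition linf :: "nat \<Rightarrow> nat \<Rightarrow> cfg \<Rightarrow> cfg \<Rightarrow> real" where
  "linf N d x y = Max ({0} \<union> {real_of_int \<bar>x j k - y j k\<bar> | j k. j < N \<and> k < d})"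

definition l1 :: "nat \<Rightarrow> nat \<Rightarrow> cfg \<Rightarrow> cfg \<Rightarrow> real" where
  "l1 N d x y = (\<Sum>j<N. \<Sum>k<d. real_of_int \<bar>x j k - y j k\<bar>)"

definition permc :: "(nat \<Rightarrow> nat) \<Rightarrow> cfg \<Rightarrow> cfg" where
  "permc \<pi> y = (\<lambda>j. y (\<pi> j))"

definition dS :: "nat \<Rightarrow> nat \<Rightarrow> cfg \<Rightarrow> cfg \<Rightarrow> real" where
  "dS N d x y = Min {linf N d x (permc \<pi> y) | \<pi>. \<pi> permutes {..<N}}"

definition symmetric_set :: "nat \<Rightarrow> cfg set \<Rightarrow> bool" where
  "symmetric_set N \<Theta> \<longleftrightarrow> (\<forall>x\<in>\<Theta>. \<forall>\<pi>. \<pi> permutes {..<N} \<longrightarrow> permc \<pi> x \<in> \<Theta>)"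

definition box :: "nat \<Rightarrow> nat \<Rightarrow> real \<Rightarrow> cfg \<Rightarrow> cfg set" where
  "box N d l a = {x \<in> conf N d. dS N d x a \<le> l}"

definition bdry_ex :: "nat \<Rightarrow> nat \<Rightarrow> cfg set \<Rightarrow> cfg set \<Rightarrow> cfg set" where
  "bdry_ex N d \<Theta> \<Phi> = {v \<in> \<Theta> - \<Phi>. \<exists>u\<in>\<Phi>. dS N d u v = 1}"

definition inner_part :: "nat \<Rightarrow> nat \<Rightarrow> cfg set \<Rightarrow> cfg set \<Rightarrow> real \<Rightarrow> cfg set" where
  "inner_part N d \<Theta> \<Phi> r = {x \<in> \<Phi>. \<forall>z \<in> \<Theta> - \<Phi>. r \<le> dS N d x z}"

definition Vpot :: "nat \<Rightarrow> ((nat \<Rightarrow> int) \<Rightarrow> real) \<Rightarrow> cfg \<Rightarrow> real" where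
  "Vpot N \<V> x = (\<Sum>j<N. \<V> (x j))"

definition Upot :: "nat \<Rightarrow> ((nat \<Rightarrow> int) \<Rightarrow> real) \<Rightarrow> cfg \<Rightarrow> real" where
  "Upot N \<U> x = (\<Sum>j<N. \<Sum>i<j. \<U> (\<lambda>k. x i k - x j k))"

definition Hrestr :: "nat \<Rightarrow> nat \<Rightarrow> real \<Rightarrow> ((nat \<Rightarrow> int) \<Rightarrow> real) \<Rightarrow> ((nat \<Rightarrow> int) \<Rightarrow> real)
    \<Rightarrow> cfg set \<Rightarrow> (cfg \<Rightarrow> 'a::real_algebra_1) \<Rightarrow> cfg \<Rightarrow> 'a" where
  "Hrestr N d lam \<V> \<U> \<Theta> f x =
     - (\<Sum>y \<in> {y \<in> \<Theta>. l1 N d x y = 1}. f y) + of_real (lam * Vpot N \<V> x + Upot N \<U> x) * f x"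

definition gen_eigenfunction :: "nat \<Rightarrow> nat \<Rightarrow> real \<Rightarrow> ((nat \<Rightarrow> int) \<Rightarrow> real) \<Rightarrow> ((nat \<Rightarrow> int) \<Rightarrow> real)
    \<Rightarrow> cfg set \<Rightarrow> (cfg \<Rightarrow> real) \<Rightarrow> real \<Rightarrow> bool" where
  "gen_eigenfunction N d lam \<V> \<U> \<Theta> \<psi> \<mu> \<longleftrightarrow>
     (\<forall>x\<in>\<Theta>. Hrestr N d lam \<V> \<U> \<Theta> \<psi> x = \<mu> * \<psi> x)"

text \<open>Spectrum of H_Lambda on l^2(Lambda) (Lambda finite): its eigenvalues.\<close>
definition spec_restr :: "nat \<Rightarrow> nat \<Rightarrow> real \<Rightarrow> ((nat \<Rightarrow> int) \<Rightarrow> real) \<Rightarrow> ((nat \<Rightarrow> int) \<Rightarrow> real)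
    \<Rightarrow> cfg set \<Rightarrow> complex set" where
  "spec_restr N d lam \<V> \<U> \<Lambda> =
     {E. \<exists>\<phi> :: cfg \<Rightarrow> complex. (\<exists>x\<in>\<Lambda>. \<phi> x \<noteq> 0) \<and>
          (\<forall>x\<in>\<Lambda>. Hrestr N d lam \<V> \<U> \<Lambda> \<phi> x = E * \<phi> x)}"

definition l2norm :: "cfg set \<Rightarrow> (cfg \<Rightarrow> complex) \<Rightarrow> real" where
  "l2norm \<Lambda> \<phi> = sqrt (\<Sum>x\<in>\<Lambda>. (cmod (\<phi> x))\<^sup>2)"

definition localizing_at :: "nat \<Rightarrow> nat \<Rightarrow> real \<Rightarrow> real \<Rightarrow> real \<Rightarrow> cfg set \<Rightarrow> cfg \<Rightarrow> (cfg \<Rightarrow> complex) \<Rightarrow> bool" where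
  "localizing_at N d \<tau> l m \<Lambda> x \<phi> \<longleftrightarrow> l2norm \<Lambda> \<phi> = 1 \<and>
     (\<forall>y\<in>\<Lambda>. l powr \<tau> \<le> dS N d y x \<longrightarrow> cmod (\<phi> y) \<le> exp (- m * dS N d y x))"

definition localizing_fun :: "nat \<Rightarrow> nat \<Rightarrow> real \<Rightarrow> real \<Rightarrow> real \<Rightarrow> cfg set \<Rightarrow> (cfg \<Rightarrow> complex) \<Rightarrow> bool" where
  "localizing_fun N d \<tau> l m \<Lambda> \<phi> \<longleftrightarrow> (\<exists>x\<in>\<Lambda>. localizing_at N d \<tau> l m \<Lambda> x \<phi>)"

text \<open>Lambda_l(a) is m-localizing for H: H_Lambda has an orthonormal eigenbasis of
  m-localizing functions (functions are represented as vanishing outside Lambda; an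
  orthonormal family of card Lambda elements is a basis of l^2(Lambda)).\<close>
definition localizing_box :: "nat \<Rightarrow> nat \<Rightarrow> real \<Rightarrow> real \<Rightarrow> real \<Rightarrow> ((nat \<Rightarrow> int) \<Rightarrow> real)
    \<Rightarrow> ((nat \<Rightarrow> int) \<Rightarrow> real) \<Rightarrow> real \<Rightarrow> cfg \<Rightarrow> bool" where
  "localizing_box N d \<tau> m lam \<V> \<U> l a \<longleftrightarrow>
     (let \<Lambda> = box N d l a in
      \<exists>B :: (cfg \<Rightarrow> complex) set. finite B \<and> card B = card \<Lambda> \<and>
        (\<forall>\<phi>\<in>B. (\<forall>x. x \<notin> \<Lambda> \<longrightarrow> \<phi> x = 0) \<and>
                (\<exists>E. \<forall>x\<in>\<Lambda>. Hrestr N d lam \<V> \<U> \<Lambda> \<phi> x = E * \<phi> x) \<and>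
                localizing_fun N d \<tau> l m \<Lambda> \<phi>) \<and>
        (\<forall>\<phi>\<in>B. \<forall>\<phi>'\<in>B. \<phi> \<noteq> \<phi>' \<longrightarrow> (\<Sum>x\<in>\<Lambda>. \<phi> x * cnj (\<phi>' x)) = 0))"

end

theory Submission
  imports Defs "HOL-Library.Function_Algebras"
begin

lemma linf_set_eq: fixes x y :: cfg and N d :: nat shows "{real_of_int \<bar>x j k - y j k\<bar> | j k. j < N \<and> k < d} =
   (\<lambda>(j,k). real_of_int \<bar>x j k - y j k\<bar>) ` ({..<N} \<times> {..<d})"
  by auto

lemma linf_fin: fixes x y :: cfg and N d :: nat shows "finite ({0} \<union> {real_of_int \<bar>x j k - y j k\<bar> | j k. j < N \<and> k < d})"
  unfolding linf_set_eq by auto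

lemma linf_ge: "j < N \<Longrightarrow> k < d \<Longrightarrow> real_of_int \<bar>x j k - y j k\<bar> \<le> linf N d x y"
  unfolding linf_def by (rule Max_ge[OF linf_fin]) blast

lemma linf_nonneg: "0 \<le> linf N d x y"
  unfolding linf_def by (rule Max_ge[OF linf_fin]) blast

lemma linf_le: "(\<And>j k. j < N \<Longrightarrow> k < d \<Longrightarrow> real_of_int \<bar>x j k - y j k\<bar> \<le> r) \<Longrightarrow> 0 \<le> r \<Longrightarrow> linf N d x y \<le> r"
  unfolding linf_def by (subst Max_le_iff[OF linf_fin]) auto

lemma linf_self: "linf N d x x = 0"
  by (intro antisym linf_le linf_nonneg) auto

lemma linf_sym: "linf N d x y = linf N d y x"
proof (intro antisym linf_le linf_nonneg)
  fix j k assume a: "j < N" "k < d"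
  show "real_of_int \<bar>x j k - y j k\<bar> \<le> linf N d y x"
    using linf_ge[OF a, of y x] by (simp add: abs_minus_commute)
  show "real_of_int \<bar>y j k - x j k\<bar> \<le> linf N d x y"
    using linf_ge[OF a, of x y] by (simp add: abs_minus_commute)
qed

lemma linf_tri: "linf N d x z \<le> linf N d x y + linf N d y z"
proof (intro linf_le)
  fix j k assume a: "j < N" "k < d"
  have "real_of_int \<bar>x j k - z j k\<bar> \<le> real_of_int \<bar>x j k - y j k\<bar> + real_of_int \<bar>y j k - z j k\<bar>" by simp
  also have "\<dots> \<le> linf N d x y + linf N d y z" using linf_ge[OF a] by (intro add_mono) auto
  finally show "real_of_int \<bar>x j k - z j k\<bar> \<le> linf N d x y + linf N d y z" .
qed (auto intro: add_nonneg_nonneg linf_nonneg)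

lemma linf_le_l1: "linf N d x y \<le> l1 N d x y"
proof (intro linf_le)
  fix j k assume a: "j < N" "k < d"
  have "real_of_int \<bar>x j k - y j k\<bar> \<le> (\<Sum>k<d. real_of_int \<bar>x j k - y j k\<bar>)"
    using a by (intro member_le_sum) auto
  also have "\<dots> \<le> (\<Sum>j<N. \<Sum>k<d. real_of_int \<bar>x j k - y j k\<bar>)"
    using a by (intro member_le_sum[where f = "\<lambda>j. \<Sum>k<d. real_of_int \<bar>x j k - y j k\<bar>"]) (auto intro: sum_nonneg)
  finally show "real_of_int \<bar>x j k - y j k\<bar> \<le> l1 N d x y" unfolding l1_def .
qed (auto simp: l1_def intro!: sum_nonneg)

lemma linf_permc:
  assumes p: "\<sigma> permutes {..<N}"
  shows "linf N d (permc \<sigma> x) (permc \<sigma> y) = linf N d x y"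
proof (intro antisym linf_le linf_nonneg)
  fix j k assume a: "j < N" "k < d"
  have "\<sigma> j < N" using permutes_in_image[OF p, of j] a by simp
  then show "real_of_int \<bar>permc \<sigma> x j k - permc \<sigma> y j k\<bar> \<le> linf N d x y"
    using linf_ge[OF \<open>\<sigma> j < N\<close> a(2), of x y] unfolding permc_def by simp
next
  fix j k assume a: "j < N" "k < d"
  define i where "i = inv \<sigma> j"
  have i1: "i < N" using a permutes_in_image[OF permutes_inv[OF p], of j] unfolding i_def by simp
  have i2: "\<sigma> i = j" unfolding i_def using permutes_inverses(1)[OF p] by simp
  note i = i1 i2
  show "real_of_int \<bar>x j k - y j k\<bar> \<le> linf N d (permc \<sigma> x) (permc \<sigma> y)"
    using linf_ge[OF i(1) a(2), of "permc \<sigma> x" "permc \<sigma> y"] i unfolding permc_def by simp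
qed

lemma permc_comp: "permc \<sigma> (permc \<rho> y) = permc (\<rho> \<circ> \<sigma>) y"
  by (simp add: permc_def fun_eq_iff)

lemma permc_id: "permc id y = y"
  by (simp add: permc_def)

lemma permc_conf: "\<sigma> permutes {..<N} \<Longrightarrow> y \<in> conf N d \<Longrightarrow> permc \<sigma> y \<in> conf N d"
  unfolding conf_def permc_def by (auto simp: permutes_def)

lemma perms_fin: "finite {\<pi>. \<pi> permutes {..<(N::nat)}}"
  by (simp add: finite_permutations)

lemma dS_set_fin: "finite {linf N d x (permc \<pi> y) | \<pi>. \<pi> permutes {..<N}}"
proof -
  have "{linf N d x (permc \<pi> y) | \<pi>. \<pi> permutes {..<N}} = (\<lambda>\<pi>. linf N d x (permc \<pi> y)) ` {\<pi>. \<pi> permutes {..<N}}"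
    by auto
  then show ?thesis using perms_fin by simp
qed

lemma dS_le: "\<pi> permutes {..<N} \<Longrightarrow> dS N d x y \<le> linf N d x (permc \<pi> y)"
  unfolding dS_def by (rule Min_le[OF dS_set_fin]) blast

lemma dS_ex: "\<exists>\<pi>. \<pi> permutes {..<N} \<and> dS N d x y = linf N d x (permc \<pi> y)"
proof -
  have ne: "{linf N d x (permc \<pi> y) | \<pi>. \<pi> permutes {..<N}} \<noteq> {}"
    using permutes_id by blast
  from Min_in[OF dS_set_fin ne] show ?thesis unfolding dS_def by blast
qed

lemma dS_nonneg: "0 \<le> dS N d x y"
proof -
  obtain \<pi> where "dS N d x y = linf N d x (permc \<pi> y)" using dS_ex by blast
  then show ?thesis using linf_nonneg by simp
qed

lemma dS_le_linf: "dS N d x y \<le> linf N d x y"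
  using dS_le[where \<pi>=id and N=N and d=d and x=x and y=y] by (simp add: permc_id permutes_id)

lemma dS_tri: "dS N d x z \<le> dS N d x y + dS N d y z"
proof -
  obtain \<pi> where p: "\<pi> permutes {..<N}" "dS N d x y = linf N d x (permc \<pi> y)" using dS_ex by blast
  obtain \<sigma> where s: "\<sigma> permutes {..<N}" "dS N d y z = linf N d y (permc \<sigma> z)" using dS_ex by blast
  have c: "(\<sigma> \<circ> \<pi>) permutes {..<N}" using p s by (simp add: permutes_compose)
  have "dS N d x z \<le> linf N d x (permc (\<sigma> \<circ> \<pi>) z)" by (rule dS_le[OF c])
  also have "\<dots> \<le> linf N d x (permc \<pi> y) + linf N d (permc \<pi> y) (permc (\<sigma> \<circ> \<pi>) z)" by (rule linf_tri)
  also have "linf N d (permc \<pi> y) (permc (\<sigma> \<circ> \<pi>) z) = linf N d y (permc \<sigma> z)"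
    using linf_permc[OF p(1), where x=y and y="permc \<sigma> z" and d=d] by (simp add: permc_comp)
  finally show ?thesis using p s by simp
qed

lemma dS_sym_le: "dS N d x y \<le> dS N d y x"
proof -
  obtain \<pi> where p: "\<pi> permutes {..<N}" "dS N d y x = linf N d y (permc \<pi> x)" using dS_ex by blast
  have ip: "inv \<pi> permutes {..<N}" using p by (simp add: permutes_inv)
  have "dS N d x y \<le> linf N d x (permc (inv \<pi>) y)" by (rule dS_le[OF ip])
  also have "\<dots> = linf N d (permc \<pi> x) (permc \<pi> (permc (inv \<pi>) y))"
    using linf_permc[OF p(1)] by simp
  also have "permc \<pi> (permc (inv \<pi>) y) = y"
    by (simp add: permc_comp permutes_inv_o(2)[OF p(1)] permc_id)
  finally show ?thesis using p by (simp add: linf_sym)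
qed

lemma dS_sym: "dS N d x y = dS N d y x"
  by (intro antisym dS_sym_le)



lemma ball_count:
  fixes c :: cfg and r :: real and N d :: nat
  assumes r: "0 \<le> r"
  shows "finite {x \<in> conf N d. linf N d x c \<le> r} \<and>
         real (card {x \<in> conf N d. linf N d x c \<le> r}) \<le> (2 * r + 1) ^ (N * d)"
proof -
  define R where "R = \<lfloor>r\<rfloor>"
  have R0: "0 \<le> R" using r unfolding R_def by simp
  have Rr: "real_of_int R \<le> r" unfolding R_def by simp
  define I where "I = {..<N} \<times> {..<d}"
  define F where "F = PiE I (\<lambda>(j,k). {c j k - R .. c j k + R})"
  define emb where "emb = (\<lambda>(G :: nat \<times> nat \<Rightarrow> int) (j::nat) (k::nat). if j < N \<and> k < d then G (j,k) else 0)"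
  let ?A = "{x \<in> conf N d. linf N d x c \<le> r}"
  have sub: "?A \<subseteq> emb ` F"
  proof
    fix x assume x: "x \<in> ?A"
    define G where "G = restrict (\<lambda>(j,k). x j k) I"
    have "G \<in> F" unfolding F_def G_def I_def
    proof (rule PiE_I)
      fix p assume p: "p \<in> {..<N} \<times> {..<d}"
      then obtain j k where jk: "p = (j,k)" "j < N" "k < d" by auto
      have "real_of_int \<bar>x j k - c j k\<bar> \<le> r" using linf_ge[OF jk(2,3), of x c] x by simp
      then have "\<bar>x j k - c j k\<bar> \<le> R" unfolding R_def by linarith
      then show "restrict (\<lambda>(j,k). x j k) ({..<N} \<times> {..<d}) p \<in> (case p of (j,k) \<Rightarrow> {c j k - R .. c j k + R})"
        using jk by auto
    qed (auto simp: restrict_def)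
    moreover have "emb G = x" using x unfolding emb_def G_def I_def conf_def by (auto simp: fun_eq_iff)
    ultimately show "x \<in> emb ` F" by blast
  qed
  have finI: "finite I" unfolding I_def by simp
  have finF: "finite F" unfolding F_def using finI by (intro finite_PiE) auto
  have cardF: "card F = nat (2 * R + 1) ^ (N * d)"
  proof -
    have "card F = (\<Prod>p\<in>I. card (case p of (j,k) \<Rightarrow> {c j k - R .. c j k + R}))"
      unfolding F_def using finI by (simp add: card_PiE)
    also have "\<dots> = (\<Prod>p\<in>I. nat (2 * R + 1))" by (intro prod.cong) auto
    also have "\<dots> = nat (2 * R + 1) ^ (N * d)" unfolding I_def by (simp add: card_cartesian_product)
    finally show ?thesis .
  qed
  have fin: "finite ?A" using finite_subset[OF sub] finF by blast
  have "card ?A \<le> card (emb ` F)" using sub finF by (intro card_mono) auto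
  also have "\<dots> \<le> card F" by (rule card_image_le[OF finF])
  finally have "real (card ?A) \<le> real (nat (2 * R + 1) ^ (N * d))" using cardF by simp
  also have "\<dots> = (2 * real_of_int R + 1) ^ (N * d)" using R0 by simp
  also have "\<dots> \<le> (2 * r + 1) ^ (N * d)" using Rr R0 by (intro power_mono) auto
  finally show ?thesis using fin by simp
qed

lemma box_count:
  fixes a :: cfg and l :: real and N d :: nat
  assumes l: "0 \<le> l"
  shows "finite (box N d l a) \<and> real (card (box N d l a)) \<le> fact N * (2 * l + 1) ^ (N * d)"
proof -
  define P where "P = {\<pi>. \<pi> permutes {..<N}}"
  define A where "A = (\<lambda>\<pi>. {x \<in> conf N d. linf N d x (permc \<pi> a) \<le> l})"
  have sub: "box N d l a \<subseteq> (\<Union>\<pi>\<in>P. A \<pi>)"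
  proof
    fix x assume x: "x \<in> box N d l a"
    obtain \<pi> where p: "\<pi> permutes {..<N}" "dS N d x a = linf N d x (permc \<pi> a)" using dS_ex by blast
    then show "x \<in> (\<Union>\<pi>\<in>P. A \<pi>)" using x unfolding box_def A_def P_def by auto
  qed
  have finP: "finite P" unfolding P_def by (rule perms_fin)
  have cP: "card P = fact N" unfolding P_def using card_permutations[of "{..<N}" N] by simp
  have finU: "finite (\<Union>\<pi>\<in>P. A \<pi>)" using finP ball_count[OF l] unfolding A_def by auto
  have "card (box N d l a) \<le> card (\<Union>\<pi>\<in>P. A \<pi>)" using sub finU by (rule card_mono[rotated])
  also have "\<dots> \<le> (\<Sum>\<pi>\<in>P. card (A \<pi>))" by (rule card_UN_le[OF finP])
  finally have "real (card (box N d l a)) \<le> (\<Sum>\<pi>\<in>P. real (card (A \<pi>)))" by (simp flip: of_nat_sum)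
  also have "\<dots> \<le> (\<Sum>\<pi>\<in>P. (2 * l + 1) ^ (N * d))" using ball_count[OF l] unfolding A_def by (intro sum_mono) auto
  also have "\<dots> = fact N * (2 * l + 1) ^ (N * d)" using cP by simp
  finally show ?thesis using finite_subset[OF sub finU] by simp
qed



lemma sum_fun_pt: "(sum (f :: 'i \<Rightarrow> 'z \<Rightarrow> 'b::comm_monoid_add) A) z = (\<Sum>a\<in>A. f a z)"
  by (induction A rule: infinite_finite_induct) auto

definition csc :: "complex \<Rightarrow> (cfg \<Rightarrow> complex) \<Rightarrow> (cfg \<Rightarrow> complex)" where
  "csc c f = (\<lambda>x. c * f x)"

interpretation vs: vector_space csc
  by unfold_locales (auto simp: csc_def fun_eq_iff algebra_simps)

definition ip :: "cfg set \<Rightarrow> (cfg \<Rightarrow> complex) \<Rightarrow> (cfg \<Rightarrow> complex) \<Rightarrow> complex" where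
  "ip \<Lambda> f g = (\<Sum>x\<in>\<Lambda>. f x * cnj (g x))"

lemma ip_cnj: "ip \<Lambda> g f = cnj (ip \<Lambda> f g)"
  unfolding ip_def by (simp add: mult.commute)

lemma ip_self_nz:
  assumes "finite \<Lambda>" "z \<in> \<Lambda>" "h z \<noteq> 0"
  shows "ip \<Lambda> h h \<noteq> 0"
proof -
  have "ip \<Lambda> h h = complex_of_real (\<Sum>x\<in>\<Lambda>. (cmod (h x))\<^sup>2)"
    unfolding ip_def by (simp add: complex_mult_cnj cmod_power2 del: of_real_power)
  moreover have "(\<Sum>x\<in>\<Lambda>. (cmod (h x))\<^sup>2) > 0"
  proof -
    have "(cmod (h z))\<^sup>2 \<le> (\<Sum>x\<in>\<Lambda>. (cmod (h x))\<^sup>2)"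
      using assms by (intro member_le_sum) auto
    moreover have "(cmod (h z))\<^sup>2 > 0" using assms by simp
    ultimately show ?thesis by linarith
  qed
  ultimately show ?thesis by (metis of_real_eq_0_iff less_irrefl)
qed

lemma complete_onb:
  fixes \<Lambda> :: "cfg set" and B :: "(cfg \<Rightarrow> complex) set" and h :: "cfg \<Rightarrow> complex"
  assumes fL: "finite \<Lambda>" and fB: "finite B" and cB: "card B = card \<Lambda>"
    and supp: "\<And>\<phi> x. \<phi> \<in> B \<Longrightarrow> x \<notin> \<Lambda> \<Longrightarrow> \<phi> x = 0"
    and nrm: "\<And>\<phi>. \<phi> \<in> B \<Longrightarrow> ip \<Lambda> \<phi> \<phi> = 1"
    and orth: "\<And>\<phi> \<phi>'. \<phi> \<in> B \<Longrightarrow> \<phi>' \<in> B \<Longrightarrow> \<phi> \<noteq> \<phi>' \<Longrightarrow> ip \<Lambda> \<phi> \<phi>' = 0"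
    and hsupp: "\<And>x. x \<notin> \<Lambda> \<Longrightarrow> h x = 0"
    and horth: "\<And>\<phi>. \<phi> \<in> B \<Longrightarrow> ip \<Lambda> h \<phi> = 0"
  shows "h x = 0"
proof (rule ccontr)
  assume hx: "h x \<noteq> 0"
  then have xL: "x \<in> \<Lambda>" using hsupp by blast
  have hh: "ip \<Lambda> h h \<noteq> 0" by (rule ip_self_nz[of \<Lambda> x h, OF fL xL hx])
  have hB: "h \<notin> B" using horth hh by blast
  define S where "S = insert h B"
  have fS: "finite S" unfolding S_def using fB by simp
  have cS: "card S = card \<Lambda> + 1" unfolding S_def using fB hB cB by simp
  have Sorth: "ip \<Lambda> v w = 0" if "v \<in> S" "w \<in> S" "v \<noteq> w" for v w
    using that orth horth ip_cnj[of \<Lambda> h] unfolding S_def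
    by (metis complex_cnj_zero insert_iff ip_cnj)
  have Snz: "ip \<Lambda> v v \<noteq> 0" if "v \<in> S" for v
    using that nrm hh unfolding S_def by auto
  have ind: "vs.independent S"
  proof (rule vs.independent_if_scalars_zero[OF fS])
    fix f w assume sum0: "(\<Sum>v\<in>S. csc (f v) v) = 0" and w: "w \<in> S"
    have pt: "(\<Sum>v\<in>S. f v * v z) = 0" for z
      using fun_cong[OF sum0, of z] by (simp add: sum_fun_pt csc_def)
    have "0 = (\<Sum>z\<in>\<Lambda>. (\<Sum>v\<in>S. f v * v z) * cnj (w z))" using pt by simp
    also have "\<dots> = (\<Sum>v\<in>S. f v * ip \<Lambda> v w)"
      unfolding ip_def by (simp add: sum_distrib_left sum_distrib_right mult.assoc sum.swap[of _ \<Lambda>])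
    also have "\<dots> = f w * ip \<Lambda> w w"
      using fS w Sorth by (subst sum.remove[of S w]) (auto intro!: sum.neutral)
    finally show "f w = 0" using Snz[OF w] by simp
  qed
  define T where "T = (\<lambda>z. (\<lambda>y. if y = z then (1::complex) else 0)) ` \<Lambda>"
  have fT: "finite T" unfolding T_def using fL by simp
  have cT: "card T \<le> card \<Lambda>" unfolding T_def using fL by (rule card_image_le)
  have spn: "S \<subseteq> vs.span T"
  proof
    fix g assume g: "g \<in> S"
    have gs: "g y = 0" if "y \<notin> \<Lambda>" for y using g that supp hsupp unfolding S_def by auto
    have "g = (\<Sum>z\<in>\<Lambda>. csc (g z) (\<lambda>y. if y = z then 1 else 0))"
    proof
      fix y
      have "(\<Sum>z\<in>\<Lambda>. csc (g z) (\<lambda>y. if y = z then 1 else 0)) y = (\<Sum>z\<in>\<Lambda>. if y = z then g y else 0)"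
        by (simp add: sum_fun_pt csc_def) (intro sum.cong, auto)
      also have "\<dots> = g y" using gs[of y] fL by (simp add: sum.delta)
      finally show "g y = (\<Sum>z\<in>\<Lambda>. csc (g z) (\<lambda>y. if y = z then 1 else 0)) y" by simp
    qed
    also have "\<dots> \<in> vs.span T"
      by (intro vs.span_sum vs.span_scale vs.span_base) (auto simp: T_def)
    finally show "g \<in> vs.span T" .
  qed
  from vs.independent_span_bound[OF fT ind spn] have "card S \<le> card T" by simp
  then show False using cS cT by simp
qed



lemma l1_sym: "l1 N d x y = l1 N d y x"
  unfolding l1_def by (simp add: abs_minus_commute)

lemma spectral_identity:
  fixes \<psi> :: "cfg \<Rightarrow> real" and \<phi> :: "cfg \<Rightarrow> complex"
  assumes fin: "finite \<Lambda>" and sub: "\<Lambda> \<subseteq> \<Theta>"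
    and finNb: "\<And>x. x \<in> \<Lambda> \<Longrightarrow> finite {y \<in> \<Theta>. l1 N d x y = 1}"
    and gen: "gen_eigenfunction N d lam \<V> \<U> \<Theta> \<psi> \<mu>"
    and eig: "\<And>x. x \<in> \<Lambda> \<Longrightarrow> Hrestr N d lam \<V> \<U> \<Lambda> \<phi> x = E * \<phi> x"
  shows "(cnj E - of_real \<mu>) * (\<Sum>x\<in>\<Lambda>. of_real (\<psi> x) * cnj (\<phi> x)) =
    (\<Sum>u\<in>\<Lambda>. of_real (\<Sum>v\<in>{v \<in> \<Theta>. l1 N d u v = 1} - \<Lambda>. \<psi> v) * cnj (\<phi> u))"
proof -
  define W where "W = (\<lambda>x. lam * Vpot N \<V> x + Upot N \<U> x)"
  define g where "g = (\<lambda>u. \<Sum>v\<in>{v \<in> \<Theta>. l1 N d u v = 1} - \<Lambda>. \<psi> v)"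
  define A where "A = (\<lambda>x y. l1 N d x y = 1)"
  have star: "g x = (W x - \<mu>) * \<psi> x - (\<Sum>y\<in>\<Lambda>. if A x y then \<psi> y else 0)" if x: "x \<in> \<Lambda>" for x
  proof -
    have e: "- (\<Sum>y\<in>{y \<in> \<Theta>. l1 N d x y = 1}. \<psi> y) + W x * \<psi> x = \<mu> * \<psi> x"
      using gen x sub unfolding gen_eigenfunction_def Hrestr_def W_def by auto
    have split: "(\<Sum>y\<in>{y \<in> \<Theta>. l1 N d x y = 1}. \<psi> y) =
       (\<Sum>y\<in>{y \<in> \<Theta>. l1 N d x y = 1} \<inter> \<Lambda>. \<psi> y) + g x"
      unfolding g_def using finNb[OF x] by (simp add: sum.Int_Diff)
    have "{y \<in> \<Theta>. l1 N d x y = 1} \<inter> \<Lambda> = {y \<in> \<Lambda>. A x y}" using sub unfolding A_def by auto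
    then have "(\<Sum>y\<in>{y \<in> \<Theta>. l1 N d x y = 1} \<inter> \<Lambda>. \<psi> y) = (\<Sum>y\<in>\<Lambda>. if A x y then \<psi> y else 0)"
      using fin by (simp add: sum.inter_filter)
    then show ?thesis using e split by (simp add: algebra_simps)
  qed
  have star2: "(\<Sum>x\<in>\<Lambda>. if A y x then \<phi> x else 0) = (of_real (W y) - E) * \<phi> y" if y: "y \<in> \<Lambda>" for y
  proof -
    have "{x \<in> \<Lambda>. l1 N d y x = 1} = {x \<in> \<Lambda>. A y x}" unfolding A_def by auto
    then have "(\<Sum>x\<in>{x \<in> \<Lambda>. l1 N d y x = 1}. \<phi> x) = (\<Sum>x\<in>\<Lambda>. if A y x then \<phi> x else 0)"
      using fin by (simp add: sum.inter_filter)
    moreover have "- (\<Sum>x\<in>{x \<in> \<Lambda>. l1 N d y x = 1}. \<phi> x) + of_real (W y) * \<phi> y = E * \<phi> y"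
      using eig[OF y] unfolding Hrestr_def W_def by simp
    ultimately show ?thesis by (simp add: algebra_simps)
  qed
  have Asym: "A x y = A y x" for x y unfolding A_def by (simp add: l1_sym)
  have "(\<Sum>u\<in>\<Lambda>. of_real (g u) * cnj (\<phi> u)) =
     (\<Sum>u\<in>\<Lambda>. of_real ((W u - \<mu>) * \<psi> u) * cnj (\<phi> u)) - (\<Sum>u\<in>\<Lambda>. (\<Sum>y\<in>\<Lambda>. if A u y then of_real (\<psi> y) * cnj (\<phi> u) else 0))"
  proof -
    have inner: "complex_of_real (\<Sum>y\<in>\<Lambda>. if A u y then \<psi> y else 0) * c = (\<Sum>y\<in>\<Lambda>. if A u y then of_real (\<psi> y) * c else 0)" for u c
      by (simp add: sum_distrib_right) (intro sum.cong, auto)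
    have "(\<Sum>u\<in>\<Lambda>. of_real (g u) * cnj (\<phi> u)) = (\<Sum>u\<in>\<Lambda>. of_real ((W u - \<mu>) * \<psi> u) * cnj (\<phi> u) - (\<Sum>y\<in>\<Lambda>. if A u y then of_real (\<psi> y) * cnj (\<phi> u) else 0))"
      by (intro sum.cong refl) (simp only: star of_real_diff left_diff_distrib inner)
    then show ?thesis by (simp only: sum_subtractf)
  qed
  also have "(\<Sum>u\<in>\<Lambda>. (\<Sum>y\<in>\<Lambda>. if A u y then of_real (\<psi> y) * cnj (\<phi> u) else 0)) =
      (\<Sum>y\<in>\<Lambda>. of_real (\<psi> y) * cnj (\<Sum>u\<in>\<Lambda>. if A y u then \<phi> u else 0))"
    by (subst sum.swap) (simp add: sum_distrib_left Asym if_distrib cong: if_cong)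
  also have "\<dots> = (\<Sum>y\<in>\<Lambda>. of_real (\<psi> y) * cnj ((of_real (W y) - E) * \<phi> y))"
    by (intro sum.cong refl) (simp add: star2)
  finally have "(\<Sum>u\<in>\<Lambda>. of_real (g u) * cnj (\<phi> u)) =
     (\<Sum>u\<in>\<Lambda>. (cnj E - of_real \<mu>) * (of_real (\<psi> u) * cnj (\<phi> u)))"
    by (simp add: sum_subtractf[symmetric] algebra_simps)
  then show ?thesis unfolding g_def by (simp add: sum_distrib_left)
qed



lemma powr_ge:
  fixes a X l :: real
  assumes "0 < a" "0 < X" "X powr (1/a) \<le> l"
  shows "X \<le> l powr a"
proof -
  have "X = (X powr (1/a)) powr a" using assms by (simp add: powr_powr)
  also have "\<dots> \<le> l powr a" using assms by (intro powr_mono2) auto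
  finally show ?thesis .
qed

lemma exp_combine:
  fixes a b c k e :: real
  shows "(exp a * exp b)^2 * exp b * exp c * (exp k * exp e) = exp (2 * a + 3 * b + c + k + e)"
proof -
  have "2 * a + 3 * b + c + k + e = a + a + b + b + b + c + k + e" by simp
  then show ?thesis by (simp only: exp_add power2_eq_square mult_ac)
qed

lemma numeric:
  fixes m \<tau> \<gamma> \<beta> :: real and d :: nat
  assumes b: "0 < \<beta>" and g: "1 < \<gamma>" and gbt: "\<gamma> * \<beta> < \<tau>" and t1: "\<tau> < 1" and t0: "0 < \<tau>"
    and m: "0 < m" and d: "1 \<le> d"
  shows "\<exists>C. \<forall>(N::nat) (l::real). 1 \<le> N \<longrightarrow> 1 \<le> l \<longrightarrow> C * (real N * ln (2 + real N)) powr (1/\<tau>) \<le> l \<longrightarrow>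
     (fact N * (2*l+1)^(N*d))^2 * 3^(N*d) * exp (4*m - 2*m*l powr \<tau>) * (2 * exp ((l powr \<gamma>) powr \<beta>)) \<le> 1
     \<and> 2 * l powr \<tau> \<le> l powr ((1+\<tau>)/2) - 1 \<and> 3 * l powr (- (1-\<tau>)/2) \<le> 1"
proof -
  define c0 where "c0 = m/3"
  define c4 where "c4 = m/(9*d)"
  have c0: "0 < c0" and c4: "0 < c4" using m d unfolding c0_def c4_def by auto
  define X1 where "X1 = (ln 2 + 4*m)/c0"
  define X2 where "X2 = 1/c0"
  define X4 where "X4 = max 1 ((ln 3 + 4/\<tau>)/c4)"
  have ln2: "0 < ln (2::real)" by simp
  have X1: "0 < X1" unfolding X1_def using m c0 ln2 by (intro divide_pos_pos) linarith+
  have X2: "0 < X2" unfolding X2_def using c0 by simp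
  have X4: "1 \<le> X4" unfolding X4_def by simp
  define L0 where "L0 = max 1 (max (X1 powr (1/\<tau>)) (max (X2 powr (1/(\<tau>-\<gamma>*\<beta>))) (max (3 powr (1/((1-\<tau>)/2))) (X4 powr (1/(\<tau>/4))))))"
  define K0 where "K0 = max (2/c0) (3*d*(1+2/\<tau>)/c0)"
  have K0: "0 < K0" unfolding K0_def using c0 by (simp add: less_max_iff_disj)
  define C where "C = max L0 (K0 powr (1/\<tau>))"
  have C1: "1 \<le> C" unfolding C_def L0_def by simp
  show ?thesis
  proof (intro exI[of _ C] allI impI)
    fix N :: nat and l :: real
    assume N: "1 \<le> N" and l1: "1 \<le> l" and lC: "C * (real N * ln (2 + real N)) powr (1/\<tau>) \<le> l"
    define P where "P = l powr \<tau>"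
    have ln3: "1 \<le> ln (3::real)" using exp_le by (simp add: ln_ge_iff)
    have lnN2: "ln 3 \<le> ln (2 + real N)" using N by simp
    have lnN1: "1 \<le> ln (2 + real N)" using ln3 lnN2 by linarith
    have NL: "1 \<le> real N * ln (2 + real N)"
    proof -
      have "1 * 1 \<le> real N * ln (2 + real N)" using N lnN1 by (intro mult_mono) auto
      then show ?thesis by simp
    qed
    have s1: "1 \<le> (real N * ln (2 + real N)) powr (1/\<tau>)" using NL t0 by (intro ge_one_powr_ge_zero) auto
    have "C \<le> C * (real N * ln (2 + real N)) powr (1/\<tau>)" using C1 s1 by (simp add: mult_le_cancel_left1)
    then have lL0: "L0 \<le> l" using lC unfolding C_def by simp
    have T1: "X1 \<le> P" unfolding P_def using t0 X1 lL0 unfolding L0_def by (intro powr_ge) auto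
    have T2: "X2 \<le> l powr (\<tau> - \<gamma>*\<beta>)" using gbt X2 lL0 unfolding L0_def by (intro powr_ge) auto
    have T3: "3 \<le> l powr ((1-\<tau>)/2)" using t1 lL0 unfolding L0_def by (intro powr_ge) auto
    have T4: "X4 \<le> l powr (\<tau>/4)" using t0 X4 lL0 unfolding L0_def by (intro powr_ge) auto
    have CK: "K0 \<le> C powr \<tau>" using t0 K0 unfolding C_def by (intro powr_ge) auto
    have P1: "1 \<le> P" unfolding P_def using l1 t0 by (intro ge_one_powr_ge_zero) auto
    have PC: "C powr \<tau> * (real N * ln (2 + real N)) \<le> P"
    proof -
      have "(C * (real N * ln (2 + real N)) powr (1/\<tau>)) powr \<tau> \<le> P"
        unfolding P_def using lC t0 C1 by (intro powr_mono2) auto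
      moreover have "(C * (real N * ln (2 + real N)) powr (1/\<tau>)) powr \<tau> = C powr \<tau> * (real N * ln (2 + real N))"
        using t0 NL by (simp add: powr_mult powr_powr powr_one)
      ultimately show ?thesis by simp
    qed
    have KP: "K0 * (real N * ln (2 + real N)) \<le> P"
    proof -
      have "K0 * (real N * ln (2 + real N)) \<le> C powr \<tau> * (real N * ln (2 + real N))"
        using CK NL by (intro mult_right_mono) auto
      then show ?thesis using PC by linarith
    qed
    have a: "2 * (real N * ln (real N)) \<le> c0 * P"
    proof -
      have "real N * ln (real N) \<le> real N * ln (2 + real N)" using N by (intro mult_left_mono) auto
      moreover have "2/c0 * (real N * ln (2 + real N)) \<le> K0 * (real N * ln (2 + real N))"
        using NL unfolding K0_def by (intro mult_right_mono) auto
      ultimately have "2/c0 * (real N * ln (real N)) \<le> P" using KP c0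
        by (smt (verit, ccfv_SIG) divide_pos_pos mult_left_mono)
      then show ?thesis using c0 by (simp add: field_simps)
    qed
    have b: "3 * d * (real N * ln (3 * l)) \<le> c0 * P"
    proof (cases "l \<le> (2 + real N) powr (2/\<tau>)")
      case True
      have "ln l \<le> ln ((2 + real N) powr (2/\<tau>))" using True l1 by (subst ln_le_cancel_iff) auto
      also have "\<dots> = 2/\<tau> * ln (2 + real N)" by simp
      finally have lb: "ln l \<le> 2/\<tau> * ln (2 + real N)" .
      have e1: "ln (3*l) = ln 3 + ln l" using l1 by (simp add: ln_mult)
      have e2: "(1 + 2/\<tau>) * ln (2 + real N) = ln (2 + real N) + 2/\<tau> * ln (2 + real N)" by (simp add: algebra_simps)
      have "ln (3*l) \<le> (1 + 2/\<tau>) * ln (2 + real N)" using lb e1 e2 lnN2 by linarith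
      then have "(3*d*real N) * ln (3*l) \<le> (3*d*real N) * ((1 + 2/\<tau>) * ln (2 + real N))"
        by (intro mult_left_mono) auto
      then have "3 * d * (real N * ln (3 * l)) \<le> 3 * d * (1 + 2/\<tau>) * (real N * ln (2 + real N))"
        by (simp add: algebra_simps)
      also have "\<dots> \<le> c0 * K0 * (real N * ln (2 + real N))"
      proof -
        have "3*d*(1+2/\<tau>)/c0 \<le> K0" unfolding K0_def by simp
        then have "c0 * (3*d*(1+2/\<tau>)/c0) \<le> c0*K0" using c0 by (intro mult_left_mono) auto
        then have "3 * d * (1 + 2/\<tau>) \<le> c0 * K0" using c0 by simp
        then show ?thesis using NL by (intro mult_right_mono) auto
      qed
      also have "\<dots> \<le> c0 * P" using KP c0 by (simp add: mult.assoc)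
      finally show ?thesis .
    next
      case False
      have "((2 + real N) powr (2/\<tau>)) powr (\<tau>/2) \<le> l powr (\<tau>/2)" using False t0 by (intro powr_mono2) auto
      then have Nl: "real N \<le> l powr (\<tau>/2)" using t0 by (simp add: powr_powr)
      have q1: "1 \<le> l powr (\<tau>/4)" using X4 T4 by simp
      have lnl: "ln l \<le> l powr (\<tau>/4) / (\<tau>/4)" using l1 t0 by (intro ln_powr_bound) auto
      have half: "l powr (\<tau>/2) = l powr (\<tau>/4) * l powr (\<tau>/4)" by (simp flip: powr_add)
      have "ln (3*l) \<le> ln 3 + 4/\<tau> * l powr (\<tau>/4)" using lnl l1 t0 by (simp add: ln_mult field_simps)
      also have "\<dots> \<le> (ln 3 + 4/\<tau>) * l powr (\<tau>/4)" using q1 ln3 by (simp add: algebra_simps)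
      also have "\<dots> \<le> c4 * X4 * l powr (\<tau>/4)"
      proof -
        have "(ln 3 + 4/\<tau>)/c4 \<le> X4" unfolding X4_def by simp
        then have "c4 * ((ln 3 + 4/\<tau>)/c4) \<le> c4 * X4" using c4 by (intro mult_left_mono) auto
        then have "ln 3 + 4/\<tau> \<le> c4 * X4" using c4 by simp
        then show ?thesis using q1 by (intro mult_right_mono) auto
      qed
      also have "\<dots> \<le> c4 * l powr (\<tau>/2)" unfolding half using T4 c4 q1
        by (simp add: mult.assoc mult_left_mono mult_right_mono)
      finally have lnb: "ln (3*l) \<le> c4 * l powr (\<tau>/2)" .
      have "3 * d * (real N * ln (3 * l)) \<le> 3 * d * (l powr (\<tau>/2) * (c4 * l powr (\<tau>/2)))"
        using Nl lnb l1 by (intro mult_left_mono mult_mono) auto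
      also have "\<dots> = 3 * d * c4 * P" unfolding P_def by (simp add: powr_add[symmetric] algebra_simps)
      also have "3 * d * c4 = c0" unfolding c4_def c0_def using d by simp
      finally show ?thesis .
    qed
    have c: "ln 2 + 4*m \<le> c0 * P" using T1 c0 unfolding X1_def by (simp add: field_simps)
    have dd: "l powr (\<gamma>*\<beta>) \<le> c0 * P"
    proof -
      have "P = l powr (\<gamma>*\<beta>) * l powr (\<tau> - \<gamma>*\<beta>)" unfolding P_def by (simp flip: powr_add)
      moreover have "l powr (\<gamma>*\<beta>) * 1 \<le> l powr (\<gamma>*\<beta>) * (c0 * l powr (\<tau> - \<gamma>*\<beta>))"
        using T2 c0 unfolding X2_def by (intro mult_left_mono) (auto simp: field_simps)
      ultimately show ?thesis by (simp add: algebra_simps)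
    qed
    have expo: "2 * (real N * ln (real N)) + 3 * d * (real N * ln (3 * l)) + (ln 2 + 4*m) + l powr (\<gamma>*\<beta>) - 2*m*P \<le> 0"
    proof -
      have mp: "0 \<le> m * P" using m P1 by simp
      have e1: "m/3*P = (m*P)/3" by simp
      have e2: "2*m*P = 2*(m*P)" by simp
      show ?thesis using a b c dd mp unfolding c0_def e1 e2 by linarith
    qed
    have f1: "fact N \<le> exp (real N * ln (real N))"
    proof -
      have "(fact N :: real) \<le> of_nat (N ^ N)" by (rule fact_le_power)
      also have "\<dots> = exp (real N * ln (real N))" using N by (simp add: exp_of_nat_mult)
      finally show ?thesis .
    qed
    have f2: "(2*l+1) ^ (N*d) \<le> exp (real (N*d) * ln (3*l))"
    proof -
      have "(2*l+1) ^ (N*d) \<le> (3*l) ^ (N*d)" using l1 by (intro power_mono) auto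
      also have "\<dots> = exp (real (N*d) * ln (3*l))" using l1 by (subst exp_of_nat_mult) simp
      finally show ?thesis .
    qed
    have f3: "(3::real) ^ (N*d) \<le> exp (real (N*d) * ln (3*l))"
    proof -
      have "(3::real) ^ (N*d) \<le> (3*l) ^ (N*d)" using l1 by (intro power_mono) auto
      also have "\<dots> = exp (real (N*d) * ln (3*l))" using l1 by (subst exp_of_nat_mult) simp
      finally show ?thesis .
    qed
    have pw: "0 \<le> (2*l+1)^(N*d)" using l1 by simp
    have gb: "(l powr \<gamma>) powr \<beta> = l powr (\<gamma>*\<beta>)" by (simp add: powr_powr)
    have "(fact N * (2*l+1)^(N*d))^2 * 3^(N*d) * exp (4*m - 2*m*l powr \<tau>) * (2 * exp ((l powr \<gamma>) powr \<beta>))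
       \<le> (exp (real N * ln (real N)) * exp (real (N*d) * ln (3*l)))^2 * exp (real (N*d) * ln (3*l)) * exp (4*m - 2*m*P) * (exp (ln 2) * exp (l powr (\<gamma>*\<beta>)))"
    proof -
      have A: "(fact N * (2*l+1)^(N*d))^2 \<le> (exp (real N * ln (real N)) * exp (real (N*d) * ln (3*l)))^2"
        apply (rule power_mono)
         apply (rule mult_mono[OF f1 f2])
        using pw by auto
      have B: "(fact N * (2*l+1)^(N*d))^2 * 3^(N*d) \<le> (exp (real N * ln (real N)) * exp (real (N*d) * ln (3*l)))^2 * exp (real (N*d) * ln (3*l))"
        by (rule mult_mono[OF A f3]) auto
      show ?thesis unfolding gb P_def
        by (rule mult_mono[OF mult_right_mono[OF B]]) auto
    qed
    also have "\<dots> = exp (2 * (real N * ln (real N)) + 3 * (real (N*d) * ln (3*l)) + (4*m - 2*m*P) + ln 2 + l powr (\<gamma>*\<beta>))"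
      by (rule exp_combine)
    also have "\<dots> \<le> exp 0"
      using expo by (intro exp_le_cancel_iff[THEN iffD2]) (simp add: algebra_simps)
    finally have prod: "(fact N * (2*l+1)^(N*d))^2 * 3^(N*d) * exp (4*m - 2*m*l powr \<tau>) * (2 * exp ((l powr \<gamma>) powr \<beta>)) \<le> 1" by simp
    have e: "2 * l powr \<tau> \<le> l powr ((1+\<tau>)/2) - 1"
    proof -
      have "l powr ((1+\<tau>)/2) = P * l powr ((1-\<tau>)/2)" unfolding P_def by (simp add: powr_add[symmetric] field_simps)
      moreover have "P * 3 \<le> P * l powr ((1-\<tau>)/2)" using T3 P1 by (intro mult_left_mono) auto
      ultimately show ?thesis using P1 unfolding P_def by linarith
    qed
    have f: "3 * l powr (- (1-\<tau>)/2) \<le> 1"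
    proof -
      have ee: "- (1-\<tau>)/2 = - ((1-\<tau>)/2)" by (simp only: minus_divide_left)
      have "l powr (- (1-\<tau>)/2) = inverse (l powr ((1-\<tau>)/2))" unfolding ee by (rule powr_minus)
      moreover have "3 * inverse (l powr ((1-\<tau>)/2)) \<le> 1"
      proof -
        have "0 < l powr ((1-\<tau>)/2)" using T3 by linarith
        then show ?thesis using T3 by (simp add: divide_le_eq_1 field_simps)
      qed
      ultimately show ?thesis by simp
    qed
    show "(fact N * (2*l+1)^(N*d))^2 * 3^(N*d) * exp (4*m - 2*m*l powr \<tau>) * (2 * exp ((l powr \<gamma>) powr \<beta>)) \<le> 1
     \<and> 2 * l powr \<tau> \<le> l powr ((1+\<tau>)/2) - 1 \<and> 3 * l powr (- (1-\<tau>)/2) \<le> 1"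
      using prod e f by blast
  qed
qed



lemma nb_count:
  fixes u :: cfg
  assumes "\<Theta> \<subseteq> conf N d"
  shows "finite {v \<in> \<Theta>. l1 N d u v = 1} \<and> real (card {v \<in> \<Theta>. l1 N d u v = 1}) \<le> 3 ^ (N * d)"
proof -
  have sub: "{v \<in> \<Theta>. l1 N d u v = 1} \<subseteq> {x \<in> conf N d. linf N d x u \<le> 1}"
  proof
    fix v assume v: "v \<in> {v \<in> \<Theta>. l1 N d u v = 1}"
    have "linf N d v u \<le> 1" using v linf_le_l1[of N d u v] linf_sym[of N d v u] by simp
    then show "v \<in> {x \<in> conf N d. linf N d x u \<le> 1}" using v assms by auto
  qed
  have bc: "finite {x \<in> conf N d. linf N d x u \<le> 1} \<and> real (card {x \<in> conf N d. linf N d x u \<le> 1}) \<le> (2 * 1 + 1) ^ (N * d)"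
    by (rule ball_count) simp
  have "card {v \<in> \<Theta>. l1 N d u v = 1} \<le> card {x \<in> conf N d. linf N d x u \<le> 1}"
    using bc sub by (intro card_mono) auto
  then show ?thesis using bc finite_subset[OF sub] by simp
qed

lemma linf_lt1_eq:
  assumes "x \<in> conf N d" "y \<in> conf N d" "linf N d x y < 1"
  shows "x = y"
proof (rule ext, rule ext)
  fix j k
  show "x j k = y j k"
  proof (cases "j < N \<and> k < d")
    case True
    then have "real_of_int \<bar>x j k - y j k\<bar> < 1" using linf_ge[of j N k d x y] assms(3) by linarith
    then show ?thesis by linarith
  next
    case False
    then show ?thesis using assms(1,2) unfolding conf_def by auto
  qed
qed

lemma bdry_dS:
  assumes Th: "\<Theta> \<subseteq> conf N d" and u: "u \<in> box N d l a" and v: "v \<in> \<Theta>" "v \<notin> box N d l a"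
    and uv: "l1 N d u v = 1"
  shows "dS N d u v = 1"
proof -
  have le: "dS N d u v \<le> 1" using dS_le_linf[of N d u v] linf_le_l1[of N d u v] uv by simp
  have "\<not> dS N d u v < 1"
  proof
    assume lt: "dS N d u v < 1"
    obtain \<pi> where p: "\<pi> permutes {..<N}" "dS N d u v = linf N d u (permc \<pi> v)" using dS_ex by blast
    have uc: "u \<in> conf N d" using u unfolding box_def by simp
    have vc: "v \<in> conf N d" using v Th by auto
    have "u = permc \<pi> v" using linf_lt1_eq[OF uc permc_conf[OF p(1) vc]] lt p(2) by simp
    then have "dS N d u v = 0" using p linf_self[of N d u] dS_nonneg[of N d u v] by simp
    then have "dS N d v u = 0" by (simp add: dS_sym)
    then have "dS N d v a \<le> l" using dS_tri[of N d v a u] u unfolding box_def by simp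
    then show False using v vc unfolding box_def by simp
  qed
  then show ?thesis using le by simp
qed

lemma loc_prod:
  fixes \<phi> :: "cfg \<Rightarrow> complex"
  assumes loc: "\<And>z. z \<in> \<Lambda> \<Longrightarrow> P \<le> dS N d z x \<Longrightarrow> cmod (\<phi> z) \<le> exp (- m * dS N d z x)"
    and b1: "\<And>z. z \<in> \<Lambda> \<Longrightarrow> cmod (\<phi> z) \<le> 1"
    and y: "y \<in> \<Lambda>" and u: "u \<in> \<Lambda>" and far: "2 * P \<le> dS N d y u" and m: "0 < m" and P: "0 \<le> P"
  shows "cmod (\<phi> u) * cmod (\<phi> y) \<le> exp (m * P - m * dS N d y u)"
proof -
  have pm: "0 \<le> P * m" using m P by simp
  have tri: "dS N d y u \<le> dS N d y x + dS N d u x"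
    using dS_tri[of N d y u x] dS_sym[of N d x u] by simp
  show ?thesis
  proof (cases "P \<le> dS N d y x")
    case yf: True
    show ?thesis
    proof (cases "P \<le> dS N d u x")
      case uf: True
      have "cmod (\<phi> u) * cmod (\<phi> y) \<le> exp (- m * dS N d u x) * exp (- m * dS N d y x)"
        using loc[OF u uf] loc[OF y yf] by (intro mult_mono) auto
      also have "\<dots> = exp (- m * (dS N d y x + dS N d u x))" by (simp add: exp_add[symmetric] algebra_simps)
      also have "\<dots> \<le> exp (m * P - m * dS N d y u)"
        using tri m P mult_left_mono[OF tri, of m] by (simp add: algebra_simps) (insert pm, linarith)
      finally show ?thesis .
    next
      case un: False
      have "cmod (\<phi> u) * cmod (\<phi> y) \<le> 1 * exp (- m * dS N d y x)"
        using loc[OF y yf] b1[OF u] by (intro mult_mono) auto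
      also have "\<dots> \<le> exp (m * P - m * dS N d y u)"
      proof -
        have h1: "m * dS N d u x \<le> m * P" using un m by (intro mult_left_mono) auto
        have h2: "m * dS N d y u \<le> m * dS N d y x + m * dS N d u x"
          using mult_left_mono[OF tri, of m] m by (simp add: distrib_left)
        have e: "- m * dS N d y x = - (m * dS N d y x)" by simp
        have "- m * dS N d y x \<le> m * P - m * dS N d y u" unfolding e using h1 h2 by linarith
        then show ?thesis by simp
      qed
      finally show ?thesis by simp
    qed
  next
    case yn: False
    show ?thesis
    proof (cases "P \<le> dS N d u x")
      case uf: True
      have "cmod (\<phi> u) * cmod (\<phi> y) \<le> exp (- m * dS N d u x) * 1"
        using loc[OF u uf] b1[OF y] by (intro mult_mono) auto
      also have "\<dots> \<le> exp (m * P - m * dS N d y u)"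
      proof -
        have h1: "m * dS N d y x \<le> m * P" using yn m by (intro mult_left_mono) auto
        have h2: "m * dS N d y u \<le> m * dS N d y x + m * dS N d u x"
          using mult_left_mono[OF tri, of m] m by (simp add: distrib_left)
        have e: "- m * dS N d u x = - (m * dS N d u x)" by simp
        have "- m * dS N d u x \<le> m * P - m * dS N d y u" unfolding e using h1 h2 by linarith
        then show ?thesis by simp
      qed
      finally show ?thesis by simp
    next
      case un: False
      then show ?thesis using yn tri far by linarith
    qed
  qed
qed

lemma term_bound:
  fixes m \<epsilon> P R Dyu Dyv Mx psv pu py :: real
  assumes m: "0 < m" and e0: "0 \<le> \<epsilon>" and e1: "3 * \<epsilon> \<le> 1" and eR: "\<epsilon> * R = P"
    and P: "0 \<le> P" and RP: "2 * P \<le> R - 1"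
    and Dyv: "R \<le> Dyv" and tri: "Dyv \<le> Dyu + 1"
    and prod: "pu * py \<le> exp (m * P - m * Dyu)" and pp: "0 \<le> pu" "0 \<le> py"
    and psi: "exp (- (m * (1 - 3 * \<epsilon>)) * Dyv) * psv \<le> Mx" and psv: "0 \<le> psv"
  shows "psv * (pu * py) \<le> Mx * exp (4 * m - 2 * m * P)"
proof -
  define m' where "m' = m * (1 - 3 * \<epsilon>)"
  have m'0: "0 \<le> m'" unfolding m'_def using m e1 by simp
  have psi': "psv \<le> Mx * exp (m' * Dyv)"
  proof -
    have "psv = exp (m' * Dyv) * (exp (- m' * Dyv) * psv)" by (simp add: exp_minus field_simps)
    also have "\<dots> \<le> exp (m' * Dyv) * Mx" using psi unfolding m'_def by (intro mult_left_mono) auto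
    finally show ?thesis by (simp add: mult.commute)
  qed
  have Mx0: "0 \<le> Mx" using psi psv by (smt (verit) exp_gt_zero mult_nonneg_nonneg)
  have "psv * (pu * py) \<le> Mx * exp (m' * Dyv) * exp (m * P - m * Dyu)"
    using psi' prod pp psv Mx0 by (intro mult_mono) auto
  also have "\<dots> = Mx * exp (m' * Dyv + m * P - m * Dyu)" by (simp add: exp_add[symmetric] exp_diff)
  also have "\<dots> \<le> Mx * exp (4 * m - 2 * m * P)"
  proof (intro mult_left_mono Mx0 exp_le_cancel_iff[THEN iffD2])
    have hDyu: "R - 1 \<le> Dyu" using Dyv tri by linarith
    have a1: "m' * Dyv \<le> m' * (Dyu + 1)" using tri m'0 by (intro mult_left_mono) auto
    have a2: "\<epsilon> * (R - 1) \<le> \<epsilon> * Dyu" using hDyu e0 by (intro mult_left_mono) auto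
    have a3: "3 * m * (\<epsilon> * (R - 1)) \<le> 3 * m * (\<epsilon> * Dyu)" by (rule mult_left_mono) (use a2 m in auto)
    have a4: "\<epsilon> * (R - 1) = P - \<epsilon>" using eR by (simp add: algebra_simps)
    have a5: "m' * (Dyu + 1) = m * Dyu - 3 * m * (\<epsilon> * Dyu) + m'" unfolding m'_def by (simp add: algebra_simps)
    have a6: "m' \<le> m" unfolding m'_def using m e0 by (simp add: algebra_simps)
    have a7: "3 * m * (P - \<epsilon>) = 3 * (m * P) - 3 * (m * \<epsilon>)" by (simp add: algebra_simps)
    have a8: "m * \<epsilon> \<le> m * 1" using m e1 e0 by (intro mult_left_mono) auto
    show "m' * Dyv + m * P - m * Dyu \<le> 4 * m - 2 * m * P"
      using a1 a3 a4 a5 a6 a7 a8 by (simp only: mult.assoc)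
  qed
  finally show ?thesis .
qed



theorem lemma3p6:
  fixes m \<tau> \<gamma> \<beta> :: real and d :: nat
  assumes "0 < \<beta>" "\<beta> < 1 / \<gamma>" "1 < \<gamma>" "\<gamma> < 2"
    and "max (\<gamma> * \<beta>) (1 / \<gamma>) < \<tau>" "\<tau> < 1"
    and "0 < m" "1 \<le> d"
  shows "\<exists>C::real. \<forall>(N::nat) (lam::real) \<V> \<U> \<Theta> (l::real) a (\<psi>::cfg \<Rightarrow> real) (\<mu>::real).
     1 \<le> N \<longrightarrow> 0 < lam \<longrightarrow> finite {z \<in> pointsZ d. \<U> z \<noteq> 0} \<longrightarrow>
     \<Theta> \<subseteq> conf N d \<longrightarrow> symmetric_set N \<Theta> \<longrightarrow>
     1 \<le> l \<longrightarrow> a \<in> conf N d \<longrightarrow> box N d l a \<subseteq> \<Theta> \<longrightarrow>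
     localizing_box N d \<tau> m lam \<V> \<U> l a \<longrightarrow>
     gen_eigenfunction N d lam \<V> \<U> \<Theta> \<psi> \<mu> \<longrightarrow>
     (\<forall>E \<in> spec_restr N d lam \<V> \<U> (box N d l a).
        cmod (complex_of_real \<mu> - E) \<ge> 1/2 * exp (- ((l powr \<gamma>) powr \<beta>))) \<longrightarrow>
     l \<ge> C * (real N * ln (2 + real N)) powr (1 / \<tau>) \<longrightarrow>
     (\<forall>y \<in> inner_part N d \<Theta> (box N d l a) (l powr ((1 + \<tau>) / 2)).
        \<bar>\<psi> y\<bar> \<le> Max (insert 0 ((\<lambda>v. exp (- (m * (1 - 3 * l powr (- (1 - \<tau>) / 2))) * dS N d y v) * \<bar>\<psi> v\<bar>)
                        ` bdry_ex N d \<Theta> (box N d l a))))"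
proof -
  have g0: "0 < \<gamma>" using assms(3) by simp
  have t0: "0 < \<tau>" using assms(5) g0 by (smt (verit) divide_pos_pos max.strict_boundedE)
  have gbt: "\<gamma> * \<beta> < \<tau>" using assms(5) by simp
  obtain C where HC: "\<And>N l. 1 \<le> N \<Longrightarrow> 1 \<le> l \<Longrightarrow> C * (real N * ln (2 + real N)) powr (1/\<tau>) \<le> l \<Longrightarrow>
     (fact N * (2*l+1)^(N*d))^2 * 3^(N*d) * exp (4*m - 2*m*l powr \<tau>) * (2 * exp ((l powr \<gamma>) powr \<beta>)) \<le> 1
     \<and> 2 * l powr \<tau> \<le> l powr ((1+\<tau>)/2) - 1 \<and> 3 * l powr (- (1-\<tau>)/2) \<le> 1"
    using numeric[OF assms(1) assms(3) gbt assms(6) t0 assms(7) assms(8)] by blast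
  show ?thesis
  proof (intro exI[of _ C] allI impI ballI)
    fix N :: nat and lam :: real and \<V> \<U> :: "(nat \<Rightarrow> int) \<Rightarrow> real" and \<Theta> :: "cfg set" and l :: real
      and a :: cfg and \<psi> :: "cfg \<Rightarrow> real" and \<mu> :: real and y :: cfg
    assume N1: "1 \<le> N" and lam: "0 < lam" and fU: "finite {z \<in> pointsZ d. \<U> z \<noteq> 0}"
      and Thc: "\<Theta> \<subseteq> conf N d" and symT: "symmetric_set N \<Theta>" and l1: "1 \<le> l" and ac: "a \<in> conf N d"
      and subT: "box N d l a \<subseteq> \<Theta>" and lb: "localizing_box N d \<tau> m lam \<V> \<U> l a"
      and ge: "gen_eigenfunction N d lam \<V> \<U> \<Theta> \<psi> \<mu>"
      and gap: "\<forall>E \<in> spec_restr N d lam \<V> \<U> (box N d l a). cmod (complex_of_real \<mu> - E) \<ge> 1/2 * exp (- ((l powr \<gamma>) powr \<beta>))"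
      and lC: "l \<ge> C * (real N * ln (2 + real N)) powr (1 / \<tau>)"
      and yin: "y \<in> inner_part N d \<Theta> (box N d l a) (l powr ((1 + \<tau>) / 2))"
    define \<Lambda> where "\<Lambda> = box N d l a"
    have bc: "finite \<Lambda> \<and> real (card \<Lambda>) \<le> fact N * (2 * l + 1) ^ (N * d)"
      unfolding \<Lambda>_def using l1 by (intro box_count) simp
    then have finL: "finite \<Lambda>" and cardL: "real (card \<Lambda>) \<le> fact N * (2 * l + 1) ^ (N * d)" by auto
    have HCl: "(fact N * (2*l+1)^(N*d))^2 * 3^(N*d) * exp (4*m - 2*m*l powr \<tau>) * (2 * exp ((l powr \<gamma>) powr \<beta>)) \<le> 1
     \<and> 2 * l powr \<tau> \<le> l powr ((1+\<tau>)/2) - 1 \<and> 3 * l powr (- (1-\<tau>)/2) \<le> 1"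
      using HC[OF N1 l1] lC by simp
    then have nb: "(fact N * (2*l+1)^(N*d))^2 * 3^(N*d) * exp (4*m - 2*m*l powr \<tau>) * (2 * exp ((l powr \<gamma>) powr \<beta>)) \<le> 1"
      and eRP: "2 * l powr \<tau> \<le> l powr ((1+\<tau>)/2) - 1" and e3: "3 * l powr (- (1-\<tau>)/2) \<le> 1" by auto
    have "\<exists>B :: (cfg \<Rightarrow> complex) set. finite B \<and> card B = card \<Lambda> \<and>
        (\<forall>\<phi>\<in>B. (\<forall>x. x \<notin> \<Lambda> \<longrightarrow> \<phi> x = 0) \<and>
                (\<exists>E. \<forall>x\<in>\<Lambda>. Hrestr N d lam \<V> \<U> \<Lambda> \<phi> x = E * \<phi> x) \<and>
                localizing_fun N d \<tau> l m \<Lambda> \<phi>) \<and>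
        (\<forall>\<phi>\<in>B. \<forall>\<phi>'\<in>B. \<phi> \<noteq> \<phi>' \<longrightarrow> (\<Sum>x\<in>\<Lambda>. \<phi> x * cnj (\<phi>' x)) = 0)"
      using lb unfolding localizing_box_def Let_def \<Lambda>_def .
    then obtain B where fB: "finite B" and cB: "card B = card \<Lambda>"
      and Bp': "\<forall>\<phi>\<in>B. (\<forall>x. x \<notin> \<Lambda> \<longrightarrow> \<phi> x = 0) \<and>
                (\<exists>E. \<forall>x\<in>\<Lambda>. Hrestr N d lam \<V> \<U> \<Lambda> \<phi> x = E * \<phi> x) \<and>
                localizing_fun N d \<tau> l m \<Lambda> \<phi>"
      and Bo': "\<forall>\<phi>\<in>B. \<forall>\<phi>'\<in>B. \<phi> \<noteq> \<phi>' \<longrightarrow> (\<Sum>x\<in>\<Lambda>. \<phi> x * cnj (\<phi>' x)) = 0"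
      by (elim exE conjE) (rule that)
    have Bp: "\<And>\<phi>. \<phi> \<in> B \<Longrightarrow> (\<forall>x. x \<notin> \<Lambda> \<longrightarrow> \<phi> x = 0) \<and>
                (\<exists>E. \<forall>x\<in>\<Lambda>. Hrestr N d lam \<V> \<U> \<Lambda> \<phi> x = E * \<phi> x) \<and>
                localizing_fun N d \<tau> l m \<Lambda> \<phi>" using Bp' by (rule bspec)
    have Bo: "\<And>\<phi> \<phi>'. \<phi> \<in> B \<Longrightarrow> \<phi>' \<in> B \<Longrightarrow> \<phi> \<noteq> \<phi>' \<Longrightarrow> (\<Sum>x\<in>\<Lambda>. \<phi> x * cnj (\<phi>' x)) = 0"
      using Bo' by blast
    define \<epsilon> where "\<epsilon> = l powr (- (1 - \<tau>) / 2)"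
    define R where "R = l powr ((1 + \<tau>) / 2)"
    define P where "P = l powr \<tau>"
    define Q where "Q = exp (4*m - 2*m*P)"
    define \<delta> where "\<delta> = 1/2 * exp (- ((l powr \<gamma>) powr \<beta>))"
    have \<delta>0: "0 < \<delta>" unfolding \<delta>_def by simp
    have e0: "0 \<le> \<epsilon>" unfolding \<epsilon>_def by simp
    have P0: "0 \<le> P" unfolding P_def by simp
    have eR: "\<epsilon> * R = P" unfolding \<epsilon>_def R_def P_def using l1
      by (simp add: powr_add[symmetric] field_simps)
    define Mx where "Mx = Max (insert 0 ((\<lambda>v. exp (- (m * (1 - 3 * \<epsilon>)) * dS N d y v) * \<bar>\<psi> v\<bar>) ` bdry_ex N d \<Theta> \<Lambda>))"
    have finbd: "finite (bdry_ex N d \<Theta> \<Lambda>)"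
    proof -
      have "bdry_ex N d \<Theta> \<Lambda> \<subseteq> box N d (l+1) a"
      proof
        fix v assume v: "v \<in> bdry_ex N d \<Theta> \<Lambda>"
        then obtain u where u: "u \<in> \<Lambda>" "dS N d u v = 1" unfolding bdry_ex_def by auto
        have "dS N d v a \<le> dS N d v u + dS N d u a" by (rule dS_tri)
        then have "dS N d v a \<le> l + 1" using u dS_sym[of N d v u] unfolding \<Lambda>_def box_def by simp
        then show "v \<in> box N d (l+1) a" using v Thc unfolding bdry_ex_def box_def by auto
      qed
      moreover have "finite (box N d (l+1) a)" using box_count[of "l+1" N d a] l1 by simp
      ultimately show ?thesis by (rule finite_subset)
    qed
    have Mx_ge: "exp (- (m * (1 - 3 * \<epsilon>)) * dS N d y v) * \<bar>\<psi> v\<bar> \<le> Mx" if "v \<in> bdry_ex N d \<Theta> \<Lambda>" for v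
      unfolding Mx_def using finbd that by (intro Max_ge) auto
    have Mx0: "0 \<le> Mx" unfolding Mx_def using finbd by (intro Max_ge) auto
    have yL: "y \<in> \<Lambda>" and yfar: "\<And>z. z \<in> \<Theta> - \<Lambda> \<Longrightarrow> R \<le> dS N d y z"
      using yin unfolding inner_part_def \<Lambda>_def R_def by auto
    have main: "\<bar>\<psi> y\<bar> \<le> Mx"
    proof -
    have nrm1: "(\<Sum>x\<in>\<Lambda>. (cmod (\<phi> x))\<^sup>2) = 1" if ph: "\<phi> \<in> B" for \<phi>
    proof -
      obtain x0 where "localizing_at N d \<tau> l m \<Lambda> x0 \<phi>" using Bp[OF ph] unfolding localizing_fun_def by blast
      then have "sqrt (\<Sum>x\<in>\<Lambda>. (cmod (\<phi> x))\<^sup>2) = 1" unfolding localizing_at_def l2norm_def by simp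
      then show ?thesis by simp
    qed
    have b1: "cmod (\<phi> z) \<le> 1" if "\<phi> \<in> B" "z \<in> \<Lambda>" for \<phi> z
    proof -
      have "(cmod (\<phi> z))\<^sup>2 \<le> (\<Sum>x\<in>\<Lambda>. (cmod (\<phi> x))\<^sup>2)" using that finL by (intro member_le_sum) auto
      then have "(cmod (\<phi> z))\<^sup>2 \<le> 1" using nrm1[OF that(1)] by simp
      then show ?thesis by (simp add: abs_square_le_1)
    qed
    have ip1: "ip \<Lambda> \<phi> \<phi> = 1" if "\<phi> \<in> B" for \<phi>
    proof -
      have "ip \<Lambda> \<phi> \<phi> = complex_of_real (\<Sum>x\<in>\<Lambda>. (cmod (\<phi> x))\<^sup>2)"
        unfolding ip_def by (simp add: complex_mult_cnj cmod_power2 del: of_real_power)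
      then show ?thesis using nrm1[OF that] by simp
    qed
    define c where "c = (\<lambda>\<phi>. \<Sum>x\<in>\<Lambda>. complex_of_real (\<psi> x) * cnj (\<phi> x))"
    define h where "h = (\<lambda>x. (if x \<in> \<Lambda> then complex_of_real (\<psi> x) else 0) - (\<Sum>\<phi>\<in>B. c \<phi> * \<phi> x))"
    have hy: "h y = 0"
    proof (rule complete_onb[OF finL fB cB])
      show "\<And>\<phi> x. \<phi> \<in> B \<Longrightarrow> x \<notin> \<Lambda> \<Longrightarrow> \<phi> x = 0" using Bp by blast
      show "\<And>\<phi>. \<phi> \<in> B \<Longrightarrow> ip \<Lambda> \<phi> \<phi> = 1" by (rule ip1)
      show "\<And>\<phi> \<phi>'. \<phi> \<in> B \<Longrightarrow> \<phi>' \<in> B \<Longrightarrow> \<phi> \<noteq> \<phi>' \<Longrightarrow> ip \<Lambda> \<phi> \<phi>' = 0" unfolding ip_def by (rule Bo)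
      show "h x = 0" if xn: "x \<notin> \<Lambda>" for x
      proof -
        have "(\<Sum>\<phi>\<in>B. c \<phi> * \<phi> x) = 0" using Bp xn by (intro sum.neutral) auto
        then show ?thesis unfolding h_def using xn by simp
      qed
      show "ip \<Lambda> h \<phi>' = 0" if p: "\<phi>' \<in> B" for \<phi>'
      proof -
        have "ip \<Lambda> h \<phi>' = (\<Sum>x\<in>\<Lambda>. complex_of_real (\<psi> x) * cnj (\<phi>' x)) - (\<Sum>x\<in>\<Lambda>. (\<Sum>\<phi>\<in>B. c \<phi> * \<phi> x) * cnj (\<phi>' x))"
          unfolding ip_def h_def by (simp add: left_diff_distrib sum_subtractf)
        also have "(\<Sum>x\<in>\<Lambda>. (\<Sum>\<phi>\<in>B. c \<phi> * \<phi> x) * cnj (\<phi>' x)) = (\<Sum>\<phi>\<in>B. c \<phi> * ip \<Lambda> \<phi> \<phi>')"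
          unfolding ip_def by (simp add: sum_distrib_left sum_distrib_right mult.assoc sum.swap[of _ \<Lambda>])
        also have "\<dots> = c \<phi>' * ip \<Lambda> \<phi>' \<phi>'"
          using fB p Bo unfolding ip_def[symmetric] by (subst sum.remove[of B \<phi>']) (auto intro!: sum.neutral simp: ip_def)
        finally show ?thesis using ip1[OF p] unfolding c_def by simp
      qed
    qed
    then have psiy: "complex_of_real (\<psi> y) = (\<Sum>\<phi>\<in>B. c \<phi> * \<phi> y)" unfolding h_def using yL by simp
    define K where "K = (3::real) ^ (N * d)"
    have K0: "0 \<le> K" unfolding K_def by simp
    have Q0: "0 \<le> Q" unfolding Q_def by simp
    have perphi: "cmod (c \<phi>) * cmod (\<phi> y) \<le> real (card \<Lambda>) * K * (Mx * Q) / \<delta>" if ph: "\<phi> \<in> B" for \<phi>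
    proof -
      obtain E where eig: "\<And>x. x \<in> \<Lambda> \<Longrightarrow> Hrestr N d lam \<V> \<U> \<Lambda> \<phi> x = E * \<phi> x" using Bp[OF ph] by blast
      obtain x0 where x0: "x0 \<in> \<Lambda>" "localizing_at N d \<tau> l m \<Lambda> x0 \<phi>" using Bp[OF ph] unfolding localizing_fun_def by blast
      have loc: "\<And>z. z \<in> \<Lambda> \<Longrightarrow> P \<le> dS N d z x0 \<Longrightarrow> cmod (\<phi> z) \<le> exp (- m * dS N d z x0)"
        using x0(2) unfolding localizing_at_def P_def by blast
      have nz: "\<exists>x\<in>\<Lambda>. \<phi> x \<noteq> 0"
      proof (rule ccontr)
        assume "\<not> (\<exists>x\<in>\<Lambda>. \<phi> x \<noteq> 0)"
        then have "(\<Sum>x\<in>\<Lambda>. (cmod (\<phi> x))\<^sup>2) = 0" by simp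
        then show False using nrm1[OF ph] by simp
      qed
      have Espec: "E \<in> spec_restr N d lam \<V> \<U> (box N d l a)"
        unfolding spec_restr_def \<Lambda>_def[symmetric] using nz eig by blast
      have gapE: "\<delta> \<le> cmod (complex_of_real \<mu> - E)" using gap Espec unfolding \<delta>_def by blast
      have cm: "cmod (cnj E - complex_of_real \<mu>) = cmod (complex_of_real \<mu> - E)"
      proof -
        have "cnj E - complex_of_real \<mu> = cnj (E - complex_of_real \<mu>)" by simp
        then show ?thesis by (simp only: complex_mod_cnj norm_minus_commute)
      qed
      define g where "g = (\<lambda>u. \<Sum>v\<in>{v \<in> \<Theta>. l1 N d u v = 1} - \<Lambda>. \<psi> v)"
      have finNb: "\<And>x. finite {v \<in> \<Theta>. l1 N d x v = 1}" using nb_count[OF Thc] by blast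
      have SI: "(cnj E - of_real \<mu>) * c \<phi> = (\<Sum>u\<in>\<Lambda>. of_real (g u) * cnj (\<phi> u))"
        unfolding c_def g_def
        by (rule spectral_identity[OF finL subT[folded \<Lambda>_def] finNb ge eig])
      have "\<delta> * cmod (c \<phi>) \<le> cmod (cnj E - of_real \<mu>) * cmod (c \<phi>)"
        using gapE cm by (intro mult_right_mono) auto
      also have "\<dots> = cmod (\<Sum>u\<in>\<Lambda>. of_real (g u) * cnj (\<phi> u))" unfolding SI[symmetric] by (rule norm_mult[symmetric])
      also have "\<dots> \<le> (\<Sum>u\<in>\<Lambda>. \<bar>g u\<bar> * cmod (\<phi> u))" by (rule order_trans[OF norm_sum]) (simp add: norm_mult)
      also have "\<dots> \<le> (\<Sum>u\<in>\<Lambda>. (\<Sum>v\<in>{v \<in> \<Theta>. l1 N d u v = 1} - \<Lambda>. \<bar>\<psi> v\<bar>) * cmod (\<phi> u))"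
        unfolding g_def by (intro sum_mono mult_right_mono sum_abs) auto
      finally have cb: "\<delta> * cmod (c \<phi>) \<le> (\<Sum>u\<in>\<Lambda>. (\<Sum>v\<in>{v \<in> \<Theta>. l1 N d u v = 1} - \<Lambda>. \<bar>\<psi> v\<bar>) * cmod (\<phi> u))" .
      have tb: "\<bar>\<psi> v\<bar> * (cmod (\<phi> u) * cmod (\<phi> y)) \<le> Mx * Q"
        if u: "u \<in> \<Lambda>" and v: "v \<in> {v \<in> \<Theta>. l1 N d u v = 1} - \<Lambda>" for u v
      proof -
        have vT: "v \<in> \<Theta>" "v \<notin> \<Lambda>" "l1 N d u v = 1" using v by auto
        have duv: "dS N d u v = 1" using bdry_dS[OF Thc u[unfolded \<Lambda>_def] vT(1) vT(2)[unfolded \<Lambda>_def] vT(3)] .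
        have vb: "v \<in> bdry_ex N d \<Theta> \<Lambda>" unfolding bdry_ex_def using vT u duv by blast
        have Dyv: "R \<le> dS N d y v" using yfar vT by blast
        have tri: "dS N d y v \<le> dS N d y u + 1" using dS_tri[of N d y v u] duv by simp
        have far: "2 * P \<le> dS N d y u" using Dyv tri eRP unfolding P_def R_def by linarith
        have prod: "cmod (\<phi> u) * cmod (\<phi> y) \<le> exp (m * P - m * dS N d y u)"
          by (rule loc_prod[OF loc _ yL u far assms(7) P0]) (use b1[OF ph] in auto)
        have "\<bar>\<psi> v\<bar> * (cmod (\<phi> u) * cmod (\<phi> y)) \<le> Mx * exp (4 * m - 2 * m * P)"
          by (rule term_bound[OF assms(7) e0 e3[folded \<epsilon>_def] eR P0 eRP[folded P_def R_def] Dyv tri prod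
                _ _ Mx_ge[OF vb]]) auto
        then show ?thesis unfolding Q_def .
      qed
      have "\<delta> * (cmod (c \<phi>) * cmod (\<phi> y)) \<le> (\<Sum>u\<in>\<Lambda>. (\<Sum>v\<in>{v \<in> \<Theta>. l1 N d u v = 1} - \<Lambda>. \<bar>\<psi> v\<bar>) * cmod (\<phi> u)) * cmod (\<phi> y)"
        using cb by (simp add: mult.assoc[symmetric] mult_right_mono)
      also have "\<dots> = (\<Sum>u\<in>\<Lambda>. (\<Sum>v\<in>{v \<in> \<Theta>. l1 N d u v = 1} - \<Lambda>. \<bar>\<psi> v\<bar> * (cmod (\<phi> u) * cmod (\<phi> y))))"
        by (simp add: sum_distrib_right mult.assoc)
      also have "\<dots> \<le> (\<Sum>u\<in>\<Lambda>. (\<Sum>v\<in>{v \<in> \<Theta>. l1 N d u v = 1} - \<Lambda>. Mx * Q))"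
        by (intro sum_mono tb) auto
      also have "\<dots> \<le> (\<Sum>u\<in>\<Lambda>. K * (Mx * Q))"
      proof (intro sum_mono)
        fix u assume "u \<in> \<Lambda>"
        have nc: "finite {v \<in> \<Theta>. l1 N d u v = 1} \<and> real (card {v \<in> \<Theta>. l1 N d u v = 1}) \<le> 3 ^ (N * d)"
          by (rule nb_count[OF Thc])
        have "real (card ({v \<in> \<Theta>. l1 N d u v = 1} - \<Lambda>)) \<le> real (card {v \<in> \<Theta>. l1 N d u v = 1})"
          using nc by (simp add: card_mono)
        then have "real (card ({v \<in> \<Theta>. l1 N d u v = 1} - \<Lambda>)) \<le> K" using nc unfolding K_def by linarith
        then show "(\<Sum>v\<in>{v \<in> \<Theta>. l1 N d u v = 1} - \<Lambda>. Mx * Q) \<le> K * (Mx * Q)"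
          using Mx0 Q0 by (simp add: mult_right_mono)
      qed
      also have "\<dots> = real (card \<Lambda>) * K * (Mx * Q)" by simp
      finally have "\<delta> * (cmod (c \<phi>) * cmod (\<phi> y)) \<le> real (card \<Lambda>) * K * (Mx * Q)" .
      then show ?thesis using \<delta>0 by (simp add: field_simps)
    qed
    have "\<bar>\<psi> y\<bar> = cmod (\<Sum>\<phi>\<in>B. c \<phi> * \<phi> y)" using psiy by (metis norm_of_real)
    also have "\<dots> \<le> (\<Sum>\<phi>\<in>B. cmod (c \<phi>) * cmod (\<phi> y))" by (rule order_trans[OF norm_sum]) (simp add: norm_mult)
    also have "\<dots> \<le> (\<Sum>\<phi>\<in>B. real (card \<Lambda>) * K * (Mx * Q) / \<delta>)" by (intro sum_mono perphi)
    also have "\<dots> = (real (card \<Lambda>))^2 * K * (Q * (2 * exp ((l powr \<gamma>) powr \<beta>))) * Mx"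
      using cB unfolding \<delta>_def by (simp add: power2_eq_square exp_minus field_simps)
    also have "\<dots> \<le> (fact N * (2*l+1)^(N*d))^2 * K * (Q * (2 * exp ((l powr \<gamma>) powr \<beta>))) * Mx"
      using cardL K0 Q0 Mx0 by (intro mult_right_mono power_mono) auto
    also have "\<dots> \<le> 1 * Mx" using nb Mx0 unfolding K_def Q_def P_def by (intro mult_right_mono) (simp_all add: mult.assoc)
    finally show "\<bar>\<psi> y\<bar> \<le> Mx" by simp
    qed
    then show "\<bar>\<psi> y\<bar> \<le> Max (insert 0 ((\<lambda>v. exp (- (m * (1 - 3 * l powr (- (1 - \<tau>) / 2))) * dS N d y v) * \<bar>\<psi> v\<bar>)
                        ` bdry_ex N d \<Theta> (box N d l a)))"
      unfolding Mx_def \<epsilon>_def \<Lambda>_def .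
  qed
qed


end
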